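(* There is an absolute constant $C$ such that for every $\epsilon\in(0,1]$ there is an $\epsilon$-edge differentially private algorithm which, given any graph $G$, outputs a real number $\hat\rho$ with $\mathbb E[|\hat\rho-\rho(G)|]\le C\sqrt{1/\epsilon}$.
   Context: For nonempty $S\subseteq V$, $\rho(S)=|E(S)|/|S|$ with $E(S)$ the edges inside $S$, and $\rho(G)=\max_{\emptyset\ne S\subseteq V}\rho(S)$. Edge-neighboring graphs have the same vertex set and edge sets differing in exactly one edge; an algorithm is $\epsilon$-edge DP if $\Pr[\mathcal A(G)\in O]\le e^\epsilon\Pr[\mathcal A(G')\in O]$ for all edge-neighboring $G,G'$ and all output sets $O$. *)

theory Defs
  imports "HOL-Probability.Probability"
begin

type_synonym graph = "nat set \<times> nat set set"

definition is_graph :: "graph \<Rightarrow> bool" where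
  "is_graph G \<longleftrightarrow> finite (fst G) \<and> fst G \<noteq> {} \<and>
     (\<forall>e \<in> snd G. \<exists>u v. u \<noteq> v \<and> u \<in> fst G \<and> v \<in> fst G \<and> e = {u, v})"

definition edges_in :: "graph \<Rightarrow> nat set \<Rightarrow> nat set set" where
  "edges_in G S = {e \<in> snd G. e \<subseteq> S}"

definition density :: "graph \<Rightarrow> nat set \<Rightarrow> real" where
  "density G S = real (card (edges_in G S)) / real (card S)"

definition max_density :: "graph \<Rightarrow> real" where
  "max_density G = Max {density G S | S. S \<subseteq> fst G \<and> S \<noteq> {}}"

definition edge_neighboring :: "graph \<Rightarrow> graph \<Rightarrow> bool" where
  "edge_neighboring G G' \<longleftrightarrow> is_graph G \<and> is_graph G' \<and> fst G = fst G' \<and>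
     card ((snd G - snd G') \<union> (snd G' - snd G)) = 1"

definition valid_algorithm :: "(graph \<Rightarrow> real measure) \<Rightarrow> bool" where
  "valid_algorithm A \<longleftrightarrow> (\<forall>G. is_graph G \<longrightarrow> prob_space (A G) \<and> sets (A G) = sets borel)"

definition edge_DP :: "real \<Rightarrow> (graph \<Rightarrow> real measure) \<Rightarrow> bool" where
  "edge_DP \<epsilon> A \<longleftrightarrow> (\<forall>G G' U. edge_neighboring G G' \<longrightarrow> U \<in> sets borel \<longrightarrow>
      measure (A G) U \<le> exp \<epsilon> * measure (A G') U)"

end

theory Submission
  imports Defs
begin


lemma fin_edges: "is_graph G \<Longrightarrow> finite (snd G)"
proof -
  assume g: "is_graph G"
  have "snd G \<subseteq> Pow (fst G)"
  proof
    fix x assume "x \<in> snd G"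
    then obtain u v where "u \<in> fst G" "v \<in> fst G" "x = {u, v}" using g unfolding is_graph_def by blast
    then show "x \<in> Pow (fst G)" by simp
  qed
  moreover have "finite (Pow (fst G))" using g unfolding is_graph_def by simp
  ultimately show ?thesis by (rule finite_subset)
qed

lemma md_set:
  assumes "is_graph G"
  shows "finite {density G S | S. S \<subseteq> fst G \<and> S \<noteq> {}}" "{density G S | S. S \<subseteq> fst G \<and> S \<noteq> {}} \<noteq> {}"
proof -
  have e: "{density G S | S. S \<subseteq> fst G \<and> S \<noteq> {}} = density G ` {S. S \<subseteq> fst G \<and> S \<noteq> {}}" by auto
  have "{S. S \<subseteq> fst G \<and> S \<noteq> {}} \<subseteq> Pow (fst G)" by blast
  moreover have "finite (Pow (fst G))" using assms unfolding is_graph_def by simp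
  ultimately have "finite {S. S \<subseteq> fst G \<and> S \<noteq> {}}" by (rule finite_subset)
  then show "finite {density G S | S. S \<subseteq> fst G \<and> S \<noteq> {}}" unfolding e by simp
  have "fst G \<subseteq> fst G \<and> fst G \<noteq> {}" using assms unfolding is_graph_def by simp
  then show "{density G S | S. S \<subseteq> fst G \<and> S \<noteq> {}} \<noteq> {}" by blast
qed

lemma md_ge: "is_graph G \<Longrightarrow> S \<subseteq> fst G \<Longrightarrow> S \<noteq> {} \<Longrightarrow> density G S \<le> max_density G"
  unfolding max_density_def using md_set[of G] by (intro Max_ge) auto

lemma md_attain: "is_graph G \<Longrightarrow> \<exists>S. S \<subseteq> fst G \<and> S \<noteq> {} \<and> max_density G = density G S"
proof -
  assume g: "is_graph G"
  have "max_density G \<in> {density G S | S. S \<subseteq> fst G \<and> S \<noteq> {}}"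
    unfolding max_density_def by (rule Max_in[OF md_set[OF g]])
  then show ?thesis by blast
qed

lemma density_nonneg: "0 \<le> density G S" unfolding density_def by simp

lemma md_nonneg: "is_graph G \<Longrightarrow> 0 \<le> max_density G"
  using md_attain density_nonneg by metis

lemma sens:
  assumes g: "is_graph G" and g': "is_graph G'" and v: "fst G' = fst G" and e: "snd G' = insert e (snd G)"
  shows "max_density G \<le> max_density G' \<and> max_density G' ^ 2 \<le> max_density G ^ 2 + 1"
proof -
  have mono: "density G T \<le> density G' T" for T
  proof -
    have "edges_in G T \<subseteq> edges_in G' T" unfolding edges_in_def e by auto
    moreover have "finite (edges_in G' T)" unfolding edges_in_def using fin_edges[OF g'] by simp
    ultimately have "card (edges_in G T) \<le> card (edges_in G' T)" by (rule card_mono[rotated])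
    then show ?thesis unfolding density_def by (simp add: divide_right_mono)
  qed
  obtain T where T: "T \<subseteq> fst G" "T \<noteq> {}" "max_density G = density G T" using md_attain[OF g] by blast
  have le: "max_density G \<le> max_density G'"
    using T mono[of T] md_ge[OF g', of T] v by simp
  obtain S where S: "S \<subseteq> fst G'" "S \<noteq> {}" "max_density G' = density G' S" using md_attain[OF g'] by blast
  have "finite (fst G')" using g' unfolding is_graph_def by simp
  then have finS: "finite S" using S(1) by (rule finite_subset[rotated])
  define s where "s = card S"
  have s1: "s \<ge> 1" using finS S unfolding s_def by (simp add: Suc_leI card_gt_0_iff)
  have fe: "finite (edges_in G S)" unfolding edges_in_def using fin_edges[OF g] by simp
  have "edges_in G' S \<subseteq> insert e (edges_in G S)" unfolding edges_in_def e by auto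
  then have "card (edges_in G' S) \<le> card (insert e (edges_in G S))" using fe by (intro card_mono) auto
  also have "\<dots> \<le> card (edges_in G S) + 1" using fe
    by (simp add: card_insert_if)
  finally have m1: "card (edges_in G' S) \<le> card (edges_in G S) + 1" .
  have "edges_in G' S \<subseteq> {B. B \<subseteq> S \<and> card B = 2}"
  proof
    fix x assume "x \<in> edges_in G' S"
    then have x: "x \<in> snd G'" "x \<subseteq> S" unfolding edges_in_def by auto
    then obtain u v where "u \<noteq> v" "x = {u, v}" using g' unfolding is_graph_def by blast
    then show "x \<in> {B. B \<subseteq> S \<and> card B = 2}" using x by simp
  qed
  then have "card (edges_in G' S) \<le> card {B. B \<subseteq> S \<and> card B = 2}"
    using finS by (intro card_mono) auto
  also have "\<dots> = s choose 2" using n_subsets[OF finS] s_def by simp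
  finally have m2: "2 * card (edges_in G' S) \<le> s * (s - 1)" by (simp add: choose_two)
  define r where "r = max_density G"
  define r' where "r' = max_density G'"
  have sr: "real s > 0" using s1 by simp
  have rr: "r' = real (card (edges_in G' S)) / s" using S unfolding r'_def density_def s_def by simp
  have dr: "density G S \<le> r" unfolding r_def using md_ge[OF g, of S] S v by simp
  have "r' \<le> real (card (edges_in G S) + 1) / s" unfolding rr
    using m1 sr by (intro divide_right_mono) auto
  also have "\<dots> = density G S + 1 / s" unfolding density_def s_def by (simp add: add_divide_distrib)
  finally have a1: "r' \<le> r + 1 / s" using dr by linarith
  have "2 * real (card (edges_in G' S)) \<le> real s * (real s - 1)"
  proof -
    have "real (2 * card (edges_in G' S)) \<le> real (s * (s - 1))" using m2 by (simp only: of_nat_le_iff)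
    then show ?thesis using s1 by (simp add: of_nat_diff)
  qed
  then have "(2 * r') * real s \<le> (real s - 1) * real s" using rr sr
    by (simp add: field_simps)
  then have a2: "2 * r' \<le> real s - 1" using sr by (simp add: mult_le_cancel_right)
  have a3: "0 \<le> r" "r \<le> r'" using md_nonneg[OF g] le unfolding r_def r'_def by auto
  have "r'^2 - r^2 = (r' - r) * (r' + r)" by (simp add: power2_eq_square algebra_simps)
  also have "\<dots> \<le> (1 / s) * (real s - 1)"
    using a1 a2 a3 by (intro mult_mono) auto
  also have "\<dots> \<le> 1" using sr by (simp add: field_simps)
  finally have "r'^2 - r^2 \<le> 1" .
  then show ?thesis using le unfolding r_def r'_def by linarith
qed

lemma sens2:
  assumes "edge_neighboring G G'"
  shows "\<bar>max_density G ^ 2 - max_density G' ^ 2\<bar> \<le> 1"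
proof -
  from assms have g: "is_graph G" "is_graph G'" "fst G = fst G'" and c: "card ((snd G - snd G') \<union> (snd G' - snd G)) = 1"
    unfolding edge_neighboring_def by auto
  obtain e where e: "(snd G - snd G') \<union> (snd G' - snd G) = {e}" using card_1_singletonE[OF c] by blast
  have ee: "((x \<in> snd G \<and> x \<notin> snd G') \<or> (x \<in> snd G' \<and> x \<notin> snd G)) = (x = e)" for x
  proof -
    have "x \<in> (snd G - snd G') \<union> (snd G' - snd G) \<longleftrightarrow> x \<in> {e}" using e by simp
    then show ?thesis by simp
  qed
  show ?thesis
  proof (cases "e \<in> snd G")
    case True
    then have "snd G = insert e (snd G')"
      apply (intro set_eqI) subgoal for x using ee[of x] by auto done
    then have "max_density G' \<le> max_density G \<and> max_density G ^ 2 \<le> max_density G' ^ 2 + 1" by (rule sens[OF g(2) g(1) g(3)])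
    moreover have "max_density G' ^ 2 \<le> max_density G ^ 2" using calculation md_nonneg[OF g(2)] by (intro power_mono) simp_all
    ultimately show ?thesis by linarith
  next
    case False
    then have "snd G' = insert e (snd G)"
      apply (intro set_eqI) subgoal for x using ee[of x] by auto done
    then have "max_density G \<le> max_density G' \<and> max_density G' ^ 2 \<le> max_density G ^ 2 + 1" by (rule sens[OF g(1) g(2) g(3)[symmetric]])
    moreover have "max_density G ^ 2 \<le> max_density G' ^ 2" using calculation md_nonneg[OF g(1)] by (intro power_mono) simp_all
    ultimately show ?thesis by linarith
  qed
qed


lemma sqrt_diff_le: assumes q: "0 \<le> (q::real)" shows "\<bar>sqrt (max 0 x) - sqrt q\<bar> \<le> sqrt \<bar>x - q\<bar>"
proof (cases "0 \<le> x")
  case True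
  have d: "\<bar>sqrt x - sqrt q\<bar> \<le> sqrt x + sqrt q" using True q by (simp add: abs_le_iff)
  have "(sqrt x - sqrt q)^2 = \<bar>sqrt x - sqrt q\<bar> * \<bar>sqrt x - sqrt q\<bar>"
    by (metis abs_mult_self_eq power2_eq_square)
  also have "\<dots> \<le> \<bar>sqrt x - sqrt q\<bar> * (sqrt x + sqrt q)"
    by (rule mult_left_mono[OF d abs_ge_zero])
  also have "\<dots> = \<bar>(sqrt x - sqrt q) * (sqrt x + sqrt q)\<bar>" using True q by (simp add: abs_mult)
  also have "(sqrt x - sqrt q) * (sqrt x + sqrt q) = x - q" using True q
    by (simp add: algebra_simps)
  finally have "(sqrt x - sqrt q)^2 \<le> \<bar>x - q\<bar>" .
  then have "sqrt ((sqrt x - sqrt q)^2) \<le> sqrt \<bar>x - q\<bar>" by (rule real_sqrt_le_mono)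
  then show ?thesis using True by simp
next
  case False
  then show ?thesis using q by simp
qed




lemma sqrt_amgm: assumes "0 < (a::real)" "0 \<le> t" shows "sqrt t \<le> (a * t + 1 / a) / 2"
proof -
  define u where "u = sqrt t"
  have t: "t = u^2" using assms u_def by simp
  have "0 \<le> (a * u - 1)^2 / a" using assms by simp
  also have "(a * u - 1)^2 / a = a * u^2 + 1/a - 2 * u" using assms
    by (simp add: power2_eq_square field_simps)
  moreover have "0 \<le> u" unfolding u_def using assms by simp
  ultimately show ?thesis unfolding t u_def[symmetric] by simp
qed




lemma base_int: "(\<integral>\<^sup>+ y. ennreal (\<bar>y\<bar>^k * exp (- \<bar>y\<bar>)) \<partial>lborel) = ennreal (2 * fact k)"
proof -
  have sp: "ennreal (\<bar>y\<bar>^k * exp (- \<bar>y\<bar>)) =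
      ennreal (y^k * exp (-y)) * indicator {0..} y + ennreal ((-y)^k * exp (-(-y))) * indicator {..<0} y" for y :: real
    by (cases "0 \<le> y") (auto simp: indicator_def)
  have "(\<integral>\<^sup>+ y. ennreal (\<bar>y\<bar>^k * exp (- \<bar>y\<bar>)) \<partial>lborel) =
      (\<integral>\<^sup>+ y. ennreal (y^k * exp (-y)) * indicator {0..} y \<partial>lborel) +
      (\<integral>\<^sup>+ y. ennreal ((-y)^k * exp (-(-y))) * indicator {..<0} y \<partial>lborel)"
    unfolding sp by (intro nn_integral_add) auto
  also have "(\<integral>\<^sup>+ y. ennreal (y^k * exp (-y)) * indicator {0..} y \<partial>lborel) = ennreal (fact k)"
    using nn_intergal_power_times_exp_Ici[of k] by simp
  also have "(\<integral>\<^sup>+ y. ennreal ((-y)^k * exp (-(-y))) * indicator {..<0} y \<partial>lborel) =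
      ennreal \<bar>-1\<bar> * (\<integral>\<^sup>+ y. ennreal ((-(0 + -1 * y))^k * exp (-(-(0 + -1*y)))) * indicator {..<0} (0 + -1 * y) \<partial>lborel)"
    by (rule nn_integral_real_affine) auto
  also have "\<dots> = (\<integral>\<^sup>+ y. ennreal (y^k * exp (-y)) * indicator {0<..} y \<partial>lborel)"
    by (simp add: indicator_def)
  also have "\<dots> = (\<integral>\<^sup>+ y. ennreal (y^k * exp (-y)) * indicator {0..} y \<partial>lborel)"
    by (intro nn_integral_cong_AE eventually_mono[OF AE_lborel_singleton[of 0]]) (auto simp: indicator_def)
  also have "\<dots> = ennreal (fact k)"
    using nn_intergal_power_times_exp_Ici[of k] by simp
  also have "ennreal (fact k) + ennreal (fact k) = ennreal (2 * fact k)"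
    by (metis ennreal_plus fact_ge_zero mult_2)
  finally show ?thesis .
qed




definition lapd :: "real \<Rightarrow> real \<Rightarrow> real \<Rightarrow> real" where
  "lapd e q x = e / 2 * exp (- e * \<bar>x - q\<bar>)"

lemma lapd_nonneg: "0 < e \<Longrightarrow> 0 \<le> lapd e q x" unfolding lapd_def by simp

lemma em3: "0 \<le> a \<Longrightarrow> 0 \<le> b \<Longrightarrow> 0 \<le> c \<Longrightarrow> ennreal a * (ennreal b * ennreal c) = ennreal (a * (b * c))"
  by (simp add: ennreal_mult)

lemma lap_int:
  assumes e: "0 < e"
  shows "(\<integral>\<^sup>+ x. ennreal (lapd e q x) \<partial>lborel) = 1"
proof -
  have "(\<integral>\<^sup>+ x. ennreal (lapd e q x) \<partial>lborel) =
      ennreal \<bar>1/e\<bar> * (\<integral>\<^sup>+ x. ennreal (lapd e q (q + (1/e) * x)) \<partial>lborel)"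
    using e by (intro nn_integral_real_affine) (auto simp: lapd_def)
  also have "(\<lambda>x. ennreal (lapd e q (q + (1/e) * x))) = (\<lambda>x. ennreal (e/2) * ennreal (\<bar>x\<bar>^0 * exp (- \<bar>x\<bar>)))"
    using e by (auto simp: lapd_def abs_mult ennreal_mult[symmetric])
  also have "(\<integral>\<^sup>+ x. ennreal (e/2) * ennreal (\<bar>x\<bar>^0 * exp (- \<bar>x\<bar>)) \<partial>lborel) = ennreal (e/2) * ennreal (2 * fact 0)"
    using base_int[of 0] by (subst nn_integral_cmult) auto
  also have "ennreal \<bar>1/e\<bar> * (ennreal (e/2) * ennreal (2 * fact 0)) = ennreal (1/e * ((e/2) * (2 * fact 0)))"
    using e by (simp only: abs_of_pos[of "1/e"] divide_pos_pos zero_less_one, intro em3) auto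
  also have "1/e * ((e/2) * (2 * fact 0)) = 1" using e by simp
  finally show ?thesis by simp
qed

lemma lap_mom:
  assumes e: "0 < e"
  shows "(\<integral>\<^sup>+ x. ennreal (lapd e q x * \<bar>x - q\<bar>) \<partial>lborel) = ennreal (1/e)"
proof -
  have "(\<integral>\<^sup>+ x. ennreal (lapd e q x * \<bar>x - q\<bar>) \<partial>lborel) =
      ennreal \<bar>1/e\<bar> * (\<integral>\<^sup>+ x. ennreal (lapd e q (q + (1/e) * x) * \<bar>(q + (1/e) * x) - q\<bar>) \<partial>lborel)"
    using e by (intro nn_integral_real_affine) (auto simp: lapd_def)
  also have "(\<lambda>x. ennreal (lapd e q (q + (1/e) * x) * \<bar>(q + (1/e) * x) - q\<bar>)) = (\<lambda>x. ennreal (1/2) * ennreal (\<bar>x\<bar>^1 * exp (- \<bar>x\<bar>)))"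
  proof
    fix x
    have h: "lapd e q (q + (1/e) * x) * \<bar>(q + (1/e) * x) - q\<bar> = 1/2 * (\<bar>x\<bar>^1 * exp (- \<bar>x\<bar>))"
      using e by (simp add: lapd_def abs_mult)
    show "ennreal (lapd e q (q + (1/e) * x) * \<bar>(q + (1/e) * x) - q\<bar>) = ennreal (1/2) * ennreal (\<bar>x\<bar>^1 * exp (- \<bar>x\<bar>))"
      unfolding h by (rule ennreal_mult) simp_all
  qed
  also have "(\<integral>\<^sup>+ x. ennreal (1/2) * ennreal (\<bar>x\<bar>^1 * exp (- \<bar>x\<bar>)) \<partial>lborel) = ennreal (1/2) * ennreal (2 * fact 1)"
    using base_int[of 1] by (subst nn_integral_cmult) auto
  also have "ennreal \<bar>1/e\<bar> * (ennreal (1/2) * ennreal (2 * fact 1)) = ennreal (1/e * ((1/2) * (2 * fact 1)))"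
    using e by (simp only: abs_of_pos[of "1/e"] divide_pos_pos zero_less_one, intro em3) auto
  also have "1/e * ((1/2) * (2 * fact 1)) = 1/e" using e by simp
  finally show ?thesis by simp
qed



definition lapM :: "real \<Rightarrow> real \<Rightarrow> real measure" where
  "lapM e q = Nonnegative_Lebesgue_Integration.density lborel (\<lambda>x. ennreal (lapd e q x))"

definition gsq :: "real \<Rightarrow> real" where "gsq x = sqrt (max 0 x)"

definition alg :: "real \<Rightarrow> graph \<Rightarrow> real measure" where
  "alg e G = distr (lapM e (max_density G ^ 2)) borel gsq"

lemma lapd_meas[measurable]: "lapd e q \<in> borel_measurable borel"
  unfolding lapd_def by measurable

lemma gsq_meas[measurable]: "gsq \<in> borel_measurable borel"
  unfolding gsq_def by measurable

lemma sets_lapM[simp]: "sets (lapM e q) = sets borel" unfolding lapM_def by simp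
lemma space_lapM[simp]: "space (lapM e q) = UNIV" unfolding lapM_def by simp

lemma gsq_meas2: "gsq \<in> measurable (lapM e q) borel"
  by (subst measurable_cong_sets[of _ borel _ borel]) auto

lemma prob_lapM: "0 < e \<Longrightarrow> prob_space (lapM e q)"
proof (rule prob_spaceI)
  assume e: "0 < e"
  have "emeasure (lapM e q) (space (lapM e q)) = (\<integral>\<^sup>+ x. ennreal (lapd e q x) * indicator UNIV x \<partial>lborel)"
    unfolding lapM_def by (subst emeasure_density) auto
  also have "\<dots> = 1" using lap_int[OF e, of q] by simp
  finally show "emeasure (lapM e q) (space (lapM e q)) = 1" .
qed

lemma lap_dp:
  assumes e: "0 < e" and qq: "\<bar>q - q'\<bar> \<le> 1" and B: "B \<in> sets borel"
  shows "measure (lapM e q) B \<le> exp e * measure (lapM e q') B"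
proof -
  have pw: "lapd e q x \<le> exp e * lapd e q' x" for x
  proof -
    have "\<bar>x - q'\<bar> \<le> \<bar>x - q\<bar> + 1" using qq by linarith
    then have "e * \<bar>x - q'\<bar> \<le> e * (\<bar>x - q\<bar> + 1)" using e by (intro mult_left_mono) auto
    then have h: "- e * \<bar>x - q\<bar> \<le> e + - e * \<bar>x - q'\<bar>" by (simp add: algebra_simps)
    have "exp (- e * \<bar>x - q\<bar>) \<le> exp (e + - e * \<bar>x - q'\<bar>)" using h by (simp only: exp_le_cancel_iff)
    also have "\<dots> = exp e * exp (- e * \<bar>x - q'\<bar>)" by (rule exp_add)
    finally have "e / 2 * exp (- e * \<bar>x - q\<bar>) \<le> e / 2 * (exp e * exp (- e * \<bar>x - q'\<bar>))"
      using e by (intro mult_left_mono) auto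
    then show ?thesis unfolding lapd_def by (simp only: mult.left_commute)
  qed
  have "emeasure (lapM e q) B = (\<integral>\<^sup>+ x. ennreal (lapd e q x) * indicator B x \<partial>lborel)"
    unfolding lapM_def using B by (subst emeasure_density) auto
  also have "\<dots> \<le> (\<integral>\<^sup>+ x. ennreal (exp e) * (ennreal (lapd e q' x) * indicator B x) \<partial>lborel)"
  proof (intro nn_integral_mono)
    fix x
    have "ennreal (lapd e q x) \<le> ennreal (exp e) * ennreal (lapd e q' x)"
      using pw[of x] e by (simp add: ennreal_mult[symmetric] lapd_nonneg)
    then show "ennreal (lapd e q x) * indicator B x \<le> ennreal (exp e) * (ennreal (lapd e q' x) * indicator B x)"
      by (cases "x \<in> B") auto
  qed
  also have "\<dots> = ennreal (exp e) * emeasure (lapM e q') B"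
    unfolding lapM_def using B by (subst emeasure_density) (auto intro: nn_integral_cmult)
  finally have le: "emeasure (lapM e q) B \<le> ennreal (exp e) * emeasure (lapM e q') B" .
  interpret P1: prob_space "lapM e q" by (rule prob_lapM[OF e])
  interpret P2: prob_space "lapM e q'" by (rule prob_lapM[OF e])
  have "ennreal (measure (lapM e q) B) \<le> ennreal (exp e * measure (lapM e q') B)"
    using le by (simp add: P1.emeasure_eq_measure P2.emeasure_eq_measure ennreal_mult)
  then show ?thesis by (simp add: ennreal_le_iff)
qed



lemma err_bound:
  assumes e: "0 < e" and r: "0 \<le> r"
  shows "(\<integral>\<^sup>+ x. ennreal \<bar>x - r\<bar> \<partial>(distr (lapM e (r^2)) borel gsq)) \<le> ennreal (1 / sqrt e)"
proof -
  define q where "q = r^2"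
  define a where "a = sqrt e"
  have a: "0 < a" unfolding a_def using e by simp
  have sq: "sqrt q = r" unfolding q_def using r by simp
  have "(\<integral>\<^sup>+ x. ennreal \<bar>x - r\<bar> \<partial>(distr (lapM e q) borel gsq)) = (\<integral>\<^sup>+ x. ennreal \<bar>gsq x - r\<bar> \<partial>lapM e q)"
    by (rule nn_integral_distr[OF gsq_meas2]) simp
  also have "\<dots> = (\<integral>\<^sup>+ x. ennreal (lapd e q x) * ennreal \<bar>gsq x - r\<bar> \<partial>lborel)"
    unfolding lapM_def by (subst nn_integral_density) (auto simp: gsq_def)
  also have "\<dots> \<le> (\<integral>\<^sup>+ x. ennreal (a/2) * ennreal (lapd e q x * \<bar>x - q\<bar>) + ennreal (1/(2*a)) * ennreal (lapd e q x) \<partial>lborel)"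
  proof (intro nn_integral_mono)
    fix x
    have l0: "0 \<le> lapd e q x" using lapd_nonneg[OF e] .
    have "\<bar>gsq x - r\<bar> \<le> sqrt \<bar>x - q\<bar>" unfolding gsq_def sq[symmetric] by (rule sqrt_diff_le) (simp add: q_def)
    also have "\<dots> \<le> (a * \<bar>x - q\<bar> + 1 / a) / 2" by (rule sqrt_amgm[OF a]) simp
    finally have "lapd e q x * \<bar>gsq x - r\<bar> \<le> lapd e q x * ((a * \<bar>x - q\<bar> + 1 / a) / 2)"
      using l0 by (intro mult_left_mono) auto
    also have "\<dots> = a/2 * (lapd e q x * \<bar>x - q\<bar>) + 1/(2*a) * lapd e q x"
      using a by (simp add: field_simps)
    finally have le: "lapd e q x * \<bar>gsq x - r\<bar> \<le> a/2 * (lapd e q x * \<bar>x - q\<bar>) + 1/(2*a) * lapd e q x" .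
    have "ennreal (lapd e q x) * ennreal \<bar>gsq x - r\<bar> = ennreal (lapd e q x * \<bar>gsq x - r\<bar>)"
      using l0 by (rule ennreal_mult[symmetric]) simp
    also have "\<dots> \<le> ennreal (a/2 * (lapd e q x * \<bar>x - q\<bar>) + 1/(2*a) * lapd e q x)"
      using le by (rule ennreal_leI)
    also have "\<dots> = ennreal (a/2 * (lapd e q x * \<bar>x - q\<bar>)) + ennreal (1/(2*a) * lapd e q x)"
      using a l0 by (intro ennreal_plus) auto
    also have "ennreal (a/2 * (lapd e q x * \<bar>x - q\<bar>)) = ennreal (a/2) * ennreal (lapd e q x * \<bar>x - q\<bar>)"
      using a l0 by (intro ennreal_mult) auto
    also have "ennreal (1/(2*a) * lapd e q x) = ennreal (1/(2*a)) * ennreal (lapd e q x)"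
      using a l0 by (intro ennreal_mult) auto
    finally show "ennreal (lapd e q x) * ennreal \<bar>gsq x - r\<bar> \<le> ennreal (a/2) * ennreal (lapd e q x * \<bar>x - q\<bar>) + ennreal (1/(2*a)) * ennreal (lapd e q x)" .
  qed
  also have "\<dots> = (\<integral>\<^sup>+ x. ennreal (a/2) * ennreal (lapd e q x * \<bar>x - q\<bar>) \<partial>lborel) + (\<integral>\<^sup>+ x. ennreal (1/(2*a)) * ennreal (lapd e q x) \<partial>lborel)"
    by (rule nn_integral_add) auto
  also have "\<dots> = ennreal (a/2) * ennreal (1/e) + ennreal (1/(2*a)) * 1"
    using lap_mom[OF e, of q] lap_int[OF e, of q] by (simp add: nn_integral_cmult)
  also have "\<dots> = ennreal (a/2 * (1/e) + 1/(2*a))"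
    using a e by (simp add: ennreal_mult[symmetric] ennreal_plus[symmetric] del: ennreal_plus)
  also have "a/2 * (1/e) + 1/(2*a) = 1 / sqrt e"
  proof -
    have "e = a * a" unfolding a_def using e by simp
    then show ?thesis using a unfolding a_def[symmetric] by (simp add: field_simps)
  qed
  finally show ?thesis unfolding q_def .
qed



theorem mainTheorem15:
  shows "\<exists>C::real. \<forall>\<epsilon>::real. 0 < \<epsilon> \<and> \<epsilon> \<le> 1 \<longrightarrow>
    (\<exists>A. valid_algorithm A \<and> edge_DP \<epsilon> A \<and>
       (\<forall>G. is_graph G \<longrightarrow>
          (\<integral>\<^sup>+ x. ennreal \<bar>x - max_density G\<bar> \<partial>(A G)) \<le> ennreal (C * sqrt (1 / \<epsilon>))))"
proof (intro exI[of _ 1] allI impI)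
  fix e :: real assume "0 < e \<and> e \<le> 1"
  then have e: "0 < e" by simp
  show "\<exists>A. valid_algorithm A \<and> edge_DP e A \<and>
       (\<forall>G. is_graph G \<longrightarrow>
          (\<integral>\<^sup>+ x. ennreal \<bar>x - max_density G\<bar> \<partial>(A G)) \<le> ennreal (1 * sqrt (1 / e)))"
  proof (intro exI[of _ "alg e"] conjI allI impI)
    show "valid_algorithm (alg e)"
      unfolding valid_algorithm_def
    proof (intro allI impI conjI)
      fix G :: graph
      interpret P: prob_space "lapM e (max_density G ^ 2)" by (rule prob_lapM[OF e])
      show "prob_space (alg e G)" unfolding alg_def by (rule P.prob_space_distr[OF gsq_meas2])
      show "sets (alg e G) = sets borel" unfolding alg_def by simp
    qed
    show "edge_DP e (alg e)"
      unfolding edge_DP_def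
    proof (intro allI impI)
      fix G G' :: graph and U :: "real set"
      assume n: "edge_neighboring G G'" and U: "U \<in> sets borel"
      have B: "gsq -` U \<in> sets borel" using measurable_sets[OF gsq_meas U] by simp
      have "measure (alg e G) U = measure (lapM e (max_density G ^ 2)) (gsq -` U)"
        unfolding alg_def by (subst measure_distr[OF gsq_meas2 ]) (auto simp: U)
      also have "\<dots> \<le> exp e * measure (lapM e (max_density G' ^ 2)) (gsq -` U)"
        by (rule lap_dp[OF e sens2[OF n] B])
      also have "measure (lapM e (max_density G' ^ 2)) (gsq -` U) = measure (alg e G') U"
        unfolding alg_def by (subst measure_distr[OF gsq_meas2 ]) (auto simp: U)
      finally show "measure (alg e G) U \<le> exp e * measure (alg e G') U" .
    qed
    fix G :: graph assume g: "is_graph G"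
    have "(\<integral>\<^sup>+ x. ennreal \<bar>x - max_density G\<bar> \<partial>(alg e G)) \<le> ennreal (1 / sqrt e)"
      unfolding alg_def by (rule err_bound[OF e md_nonneg[OF g]])
    also have "1 / sqrt e = 1 * sqrt (1 / e)" by (simp add: real_sqrt_divide)
    finally show "(\<integral>\<^sup>+ x. ennreal \<bar>x - max_density G\<bar> \<partial>(alg e G)) \<le> ennreal (1 * sqrt (1 / e))" .
  qed
qed


end
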